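(* Let $X$ be a connected, locally connected, Hausdorff, normal, first countable topological space, $V$ a locally convex topological vector space, and $f:X\to V$ a continuous closed map that has local convexity data and is locally fiber connected. Then (i) the projection $\pi_f:X\to X_f$ is a closed map; (ii) the quotient $X_f$ is a Hausdorff space.
   Context: A subset $C\subset V$ is a cone with vertex $v_0$ if $v_0\in C$ and $(1-\lambda)v_0+\lambda v\in C$ for every $\lambda\ge 0$ and every $v\in C$, $v\ne v_0$; it is a convex cone if it is moreover convex. A continuous map $f:X\to V$ has local convexity data if for each $x\in X$ and every sufficiently small open neighborhood $U_x$ of $x$ there is a convex cone $C_x\subset V$ with vertex $f(x)$, endowed with the subspace topology from $V$, such that (VN) $f(U_x)\subset C_x$ and $f(U_x)$ is a neighborhood of $f(x)$ in $C_x$; and (SLO) $f|_{U_x}:U_x\to C_x$ is an open map, and for every neighborhood $U'_x\subset U_x$ of $x$ the set $f(U'_x)$ is a neighborhood of $f(x)$ in $C_x$. A subset $A\subset X$ satisfies condition (LFC) if for every $a\in A$, the set $A$ does not intersect two different connected components of the fiber $f^{-1}(f(a))$. The map $f$ is locally fiber connected if for every $x\in X$, every open neighborhood of $x$ contains a neighborhood $U_x$ of $x$ satisfying (LFC). Declare $x\sim y$ in $X$ iff $f(x)=f(y)$ and $x,y$ lie in the same connected component of $f^{-1}(f(x))$; $X_f:=X/\!\sim$ with the quotient topology, $\pi_f:X\to X_f$ is the projection and $\tilde f:X_f\to V$ is the unique map with $\tilde f\circ\pi_f=f$. *)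

theory Defs
  imports "HOL-Analysis.Analysis"
begin

definition locally_convex_tvs :: "'v::real_vector topology \<Rightarrow> bool" where
  "locally_convex_tvs T \<longleftrightarrow>
     topspace T = UNIV \<and>
     continuous_map (prod_topology T T) T (\<lambda>(u,v). u + v) \<and>
     continuous_map (prod_topology euclideanreal T) T (\<lambda>(c,v). c *\<^sub>R v) \<and>
     Hausdorff_space T \<and>
     (\<forall>U v. openin T U \<and> v \<in> U \<longrightarrow> (\<exists>W. openin T W \<and> convex W \<and> v \<in> W \<and> W \<subseteq> U))"

definition nbhd_in :: "'a topology \<Rightarrow> 'a set \<Rightarrow> 'a \<Rightarrow> bool" where
  "nbhd_in X S x \<longleftrightarrow> S \<subseteq> topspace X \<and> (\<exists>U. openin X U \<and> x \<in> U \<and> U \<subseteq> S)"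

definition is_cone :: "'v::real_vector set \<Rightarrow> 'v \<Rightarrow> bool" where
  "is_cone C v0 \<longleftrightarrow> v0 \<in> C \<and>
     (\<forall>v\<in>C. v \<noteq> v0 \<longrightarrow> (\<forall>l::real. l \<ge> 0 \<longrightarrow> (1 - l) *\<^sub>R v0 + l *\<^sub>R v \<in> C))"

definition is_convex_cone :: "'v::real_vector set \<Rightarrow> 'v \<Rightarrow> bool" where
  "is_convex_cone C v0 \<longleftrightarrow> is_cone C v0 \<and> convex C"

text \<open>Local convexity data: for every x and every sufficiently small open neighborhood U of x
  (i.e. every open U with x in U contained in some fixed open neighborhood W of x) there is a convex
  cone C with vertex f x satisfying (VN) and (SLO).\<close>
definition local_convexity_data :: "'a topology \<Rightarrow> 'v::real_vector topology \<Rightarrow> ('a \<Rightarrow> 'v) \<Rightarrow> bool" where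
  "local_convexity_data X T f \<longleftrightarrow>
     (\<forall>x\<in>topspace X. \<exists>W. openin X W \<and> x \<in> W \<and>
        (\<forall>U. openin X U \<and> x \<in> U \<and> U \<subseteq> W \<longrightarrow>
           (\<exists>C. is_convex_cone C (f x) \<and>
                f ` U \<subseteq> C \<and> nbhd_in (subtopology T C) (f ` U) (f x) \<and>
                open_map (subtopology X U) (subtopology T C) f \<and>
                (\<forall>U'. nbhd_in X U' x \<and> U' \<subseteq> U \<longrightarrow> nbhd_in (subtopology T C) (f ` U') (f x)))))"

definition fiber :: "'a topology \<Rightarrow> ('a \<Rightarrow> 'v) \<Rightarrow> 'a \<Rightarrow> 'a set" where
  "fiber X f a = {y \<in> topspace X. f y = f a}"

definition LFC :: "'a topology \<Rightarrow> ('a \<Rightarrow> 'v) \<Rightarrow> 'a set \<Rightarrow> bool" where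
  "LFC X f A \<longleftrightarrow>
     (\<forall>a\<in>A. \<not> (\<exists>K1 K2. K1 \<in> connected_components_of (subtopology X (fiber X f a)) \<and>
                        K2 \<in> connected_components_of (subtopology X (fiber X f a)) \<and>
                        K1 \<noteq> K2 \<and> A \<inter> K1 \<noteq> {} \<and> A \<inter> K2 \<noteq> {}))"

definition locally_fiber_connected :: "'a topology \<Rightarrow> ('a \<Rightarrow> 'v) \<Rightarrow> bool" where
  "locally_fiber_connected X f \<longleftrightarrow>
     (\<forall>x\<in>topspace X. \<forall>N. openin X N \<and> x \<in> N \<longrightarrow>
        (\<exists>U. nbhd_in X U x \<and> U \<subseteq> N \<and> LFC X f U))"

definition fib_rel :: "'a topology \<Rightarrow> ('a \<Rightarrow> 'v) \<Rightarrow> 'a \<Rightarrow> 'a \<Rightarrow> bool" where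
  "fib_rel X f x y \<longleftrightarrow> f x = f y \<and> connected_component_of (subtopology X (fiber X f x)) x y"

definition proj_f :: "'a topology \<Rightarrow> ('a \<Rightarrow> 'v) \<Rightarrow> 'a \<Rightarrow> 'a set" where
  "proj_f X f x = {y. fib_rel X f x y}"

definition quot_f :: "'a topology \<Rightarrow> ('a \<Rightarrow> 'v) \<Rightarrow> 'a set topology" where
  "quot_f X f = topology (\<lambda>S. S \<subseteq> proj_f X f ` topspace X \<and> openin X (\<Union>S))"

end

theory Submission
  imports Defs
begin

lemma proj_eq:
  "proj_f X f x = connected_component_of_set (subtopology X (fiber X f x)) x"
  unfolding proj_f_def fib_rel_def
  by (auto dest: connected_component_in_topspace simp: fiber_def)

lemma proj_sub: "proj_f X f x \<subseteq> fiber X f x"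
  unfolding proj_eq by (auto dest: connected_component_in_topspace)

lemma proj_self: "x \<in> topspace X \<Longrightarrow> x \<in> proj_f X f x"
  unfolding proj_eq by (simp add: connected_component_of_refl fiber_def)

lemma fiber_eq: "y \<in> fiber X f x \<Longrightarrow> fiber X f y = fiber X f x"
  by (auto simp: fiber_def)

lemma proj_mem_eq: "y \<in> proj_f X f x \<Longrightarrow> proj_f X f y = proj_f X f x"
proof -
  assume y: "y \<in> proj_f X f x"
  then have fy: "fiber X f y = fiber X f x" using proj_sub fiber_eq by fast
  from y have "connected_component_of (subtopology X (fiber X f x)) x y"
    unfolding proj_eq by simp
  then have "connected_component_of (subtopology X (fiber X f x)) x =
             connected_component_of (subtopology X (fiber X f x)) y"
    using connected_component_of_equiv by metis
  then show ?thesis unfolding proj_eq fy by simp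
qed

lemma proj_overlap: "z \<in> proj_f X f x \<Longrightarrow> z \<in> proj_f X f y \<Longrightarrow> proj_f X f x = proj_f X f y"
  using proj_mem_eq by metis

lemma proj_topspace: "proj_f X f x \<subseteq> topspace X"
  using proj_sub[of X f x] by (auto simp: fiber_def)

lemma openin_quot:
  "openin (quot_f X f) S \<longleftrightarrow> S \<subseteq> proj_f X f ` topspace X \<and> openin X (\<Union>S)"
proof -
  have "istopology (\<lambda>S. S \<subseteq> proj_f X f ` topspace X \<and> openin X (\<Union>S))"
    unfolding istopology_def
  proof (rule conjI; intro allI impI)
    fix S T assume S: "S \<subseteq> proj_f X f ` topspace X \<and> openin X (\<Union>S)"
      and T: "T \<subseteq> proj_f X f ` topspace X \<and> openin X (\<Union>T)"
    have "\<Union>(S \<inter> T) = \<Union>S \<inter> \<Union>T"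
    proof
      show "\<Union>S \<inter> \<Union>T \<subseteq> \<Union>(S \<inter> T)"
      proof
        fix z assume "z \<in> \<Union>S \<inter> \<Union>T"
        then obtain A B where AB: "A \<in> S" "B \<in> T" "z \<in> A" "z \<in> B" by blast
        then obtain a b where "A = proj_f X f a" "B = proj_f X f b" using S T by blast
        then have "A = B" using AB proj_overlap by metis
        then show "z \<in> \<Union>(S \<inter> T)" using AB by blast
      qed
    qed blast
    then show "S \<inter> T \<subseteq> proj_f X f ` topspace X \<and> openin X (\<Union>(S \<inter> T))"
      using S T by (metis inf.coboundedI1 openin_Int)
  next
    fix K assume a: "\<forall>S\<in>K. S \<subseteq> proj_f X f ` topspace X \<and> openin X (\<Union>S)"
      have e: "\<Union>(\<Union>K) = (\<Union>S\<in>K. \<Union>S)" by blast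
      show "\<Union>K \<subseteq> proj_f X f ` topspace X \<and> openin X (\<Union>(\<Union>K))"
        unfolding e using a by (intro conjI; (rule openin_Union)?) auto
  qed
  then show ?thesis unfolding quot_f_def by simp
qed

lemma topspace_quot: "topspace (quot_f X f) = proj_f X f ` topspace X"
proof -
  have u: "\<Union>(proj_f X f ` topspace X) = topspace X"
  proof
    show "\<Union>(proj_f X f ` topspace X) \<subseteq> topspace X" by (rule UN_least, rule proj_topspace)
    show "topspace X \<subseteq> \<Union>(proj_f X f ` topspace X)" using proj_self by fast
  qed
  have "openin (quot_f X f) (proj_f X f ` topspace X)"
    unfolding openin_quot u by simp
  then have 1: "proj_f X f ` topspace X \<subseteq> topspace (quot_f X f)" by (rule openin_subset)
  have "openin (quot_f X f) (topspace (quot_f X f))" by (rule openin_topspace)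
  then have 2: "topspace (quot_f X f) \<subseteq> proj_f X f ` topspace X" unfolding openin_quot by (rule conjunct1)
  show ?thesis using 1 2 by (rule subset_antisym[rotated])
qed

lemma fiber_topspace: "fiber X f x \<subseteq> topspace X"
  by (auto simp: fiber_def)

lemma proj_open_in_fiber:
  assumes lfc: "locally_fiber_connected X f" and x: "x \<in> topspace X"
  shows "openin (subtopology X (fiber X f x)) (proj_f X f x)"
proof (subst openin_subopen, intro ballI)
  fix y assume y: "y \<in> proj_f X f x"
  have yt: "y \<in> topspace X" using y proj_topspace by fast
  have fy: "fiber X f y = fiber X f x" using y proj_sub fiber_eq by fast
  have py: "proj_f X f y = proj_f X f x" using y proj_mem_eq by fast
  obtain U where U: "nbhd_in X U y" "LFC X f U"
    using lfc yt unfolding locally_fiber_connected_def by blast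
  obtain V where V: "openin X V" "y \<in> V" "V \<subseteq> U" using U(1) unfolding nbhd_in_def by blast
  have "V \<inter> fiber X f x \<subseteq> proj_f X f x"
  proof
    fix z assume z: "z \<in> V \<inter> fiber X f x"
    let ?S = "subtopology X (fiber X f y)"
    have tS: "topspace ?S = fiber X f y" using fiber_topspace[of X f y] by auto
    have yF: "y \<in> fiber X f y" using yt by (simp add: fiber_def)
    have zF: "z \<in> fiber X f y" using z fy by simp
    have K1: "connected_component_of_set ?S y \<in> connected_components_of ?S"
      unfolding connected_components_of_def using yF tS by simp
    have K2: "connected_component_of_set ?S z \<in> connected_components_of ?S"
      unfolding connected_components_of_def using zF tS by simp
    have y1: "y \<in> U \<inter> connected_component_of_set ?S y"
      using V yF tS by (simp add: connected_component_of_refl subset_iff)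
    have z2: "z \<in> U \<inter> connected_component_of_set ?S z"
      using V z zF tS by (auto simp add: connected_component_of_refl)
    have "connected_component_of_set ?S y = connected_component_of_set ?S z"
      using U(2) V(2,3) K1 K2 y1 z2 unfolding LFC_def by blast
    then have "z \<in> proj_f X f y" using z2 unfolding proj_eq by simp
    then show "z \<in> proj_f X f x" using py by simp
  qed
  moreover have "openin (subtopology X (fiber X f x)) (V \<inter> fiber X f x)"
    using V(1) openin_subtopology by blast
  moreover have "y \<in> V \<inter> fiber X f x" using V y proj_sub by fast
  ultimately show "\<exists>T. openin (subtopology X (fiber X f x)) T \<and> y \<in> T \<and> T \<subseteq> proj_f X f x"
    by blast
qed

lemma sat_closed:
  assumes nX: "normal_space X" and cf: "continuous_map X T f" and clf: "closed_map X T f"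
    and HT: "Hausdorff_space T" and lfc: "locally_fiber_connected X f"
    and A: "closedin X A"
  shows "closedin X (\<Union>(proj_f X f ` A))"
proof -
  let ?S = "\<Union>(proj_f X f ` A)"
  have Ssub: "?S \<subseteq> topspace X" using proj_topspace by fast
  have "X closure_of ?S \<subseteq> ?S"
  proof
    fix x assume xc: "x \<in> X closure_of ?S"
    have xt: "x \<in> topspace X" using xc in_closure_of by fast
    show "x \<in> ?S"
    proof (rule ccontr)
      assume xS: "x \<notin> ?S"
      define F where "F = fiber X f x"
      define K where "K = proj_f X f x"
      have KA: "K \<inter> A = {}"
      proof (rule ccontr)
        assume "K \<inter> A \<noteq> {}"
        then obtain a where a: "a \<in> K" "a \<in> A" by blast
        then have "proj_f X f a = K" unfolding K_def using proj_mem_eq by fast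
        then show False using xS a proj_self[OF xt, of f] K_def by blast
      qed
      have fxT: "f x \<in> topspace T" using cf xt by (auto simp: continuous_map_def Pi_iff)
      have Fcl: "closedin X F"
      proof -
        have "closedin X {y \<in> topspace X. f y \<in> {f x}}"
          by (rule closedin_continuous_map_preimage[OF cf closedin_Hausdorff_singleton[OF HT fxT]])
        moreover have "{y \<in> topspace X. f y \<in> {f x}} = F" unfolding F_def fiber_def by auto
        ultimately show ?thesis by simp
      qed
      have tF: "topspace (subtopology X F) = F" using fiber_topspace[of X f x] F_def by auto
      have "closedin (subtopology X F) K" unfolding K_def proj_eq F_def
        by (rule closedin_connected_component_of)
      then have Kcl: "closedin X K" using closedin_closed_subtopology[OF Fcl] by blast
      have Kop: "openin (subtopology X F) K"
        unfolding K_def F_def using proj_open_in_fiber[OF lfc xt] .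
      have "closedin (subtopology X F) (topspace (subtopology X F) - K)"
        by (rule closedin_diff[OF closedin_topspace Kop])
      then have "closedin (subtopology X F) (F - K)" using tF by simp
      then have FKcl: "closedin X (F - K)" using closedin_closed_subtopology[OF Fcl] by blast
      have AFK: "closedin X (A \<union> (F - K))" by (rule closedin_Un[OF A FKcl])
      have "disjnt K (A \<union> (F - K))" using KA by (auto simp: disjnt_def)
      then obtain Oa Pa where OP: "openin X Oa" "openin X Pa" "K \<subseteq> Oa" "A \<union> (F - K) \<subseteq> Pa" "disjnt Oa Pa"
        using nX[unfolded normal_space_def, rule_format, of K "A \<union> (F - K)"] Kcl AFK by blast
      define B where "B = topspace X - (Oa \<union> Pa)"
      have Bcl: "closedin X B" unfolding B_def using OP by (intro closedin_diff closedin_topspace openin_Un)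
      have fBcl: "closedin T (f ` B)" using clf Bcl closed_map_def by blast
      have BF: "B \<inter> F = {}"
        unfolding B_def using OP(3,4) by auto
      define N where "N = topspace T - f ` B"
      have Nop: "openin T N" unfolding N_def using fBcl by blast
      have fxN: "f x \<in> N"
      proof -
        have "f x \<notin> f ` B"
        proof
          assume "f x \<in> f ` B"
          then obtain b where b: "b \<in> B" "f x = f b" by blast
          then have "b \<in> F" unfolding F_def fiber_def B_def by auto
          then show False using b BF by blast
        qed
        then show ?thesis unfolding N_def using fxT by blast
      qed
      define G where "G = Oa \<inter> {z \<in> topspace X. f z \<in> N}"
      have Gop: "openin X G" unfolding G_def
        using OP(1) openin_continuous_map_preimage[OF cf Nop] by blast
      have xG: "x \<in> G" unfolding G_def using fxN xt OP(3) proj_self[OF xt, of f] K_def by auto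
      obtain y where y: "y \<in> ?S" "y \<in> G" using xc Gop xG unfolding in_closure_of by blast
      then obtain a where a: "a \<in> A" "y \<in> proj_f X f a" by blast
      have pya: "proj_f X f y = proj_f X f a" using a proj_mem_eq by fast
      have yt: "y \<in> topspace X" using y Ssub by blast
      have con: "connectedin X (proj_f X f y)"
        unfolding proj_eq using connectedin_connected_component_of connectedin_subtopology by metis
      have sub: "proj_f X f y \<subseteq> Oa \<union> Pa"
      proof
        fix z assume z: "z \<in> proj_f X f y"
        then have zt: "z \<in> topspace X" and fz: "f z = f y" using proj_sub[of X f y] by (auto simp: fiber_def)
        have "f y \<in> N" using y(2) G_def by auto
        then have "z \<notin> B" using fz N_def by (metis Diff_iff image_eqI)
        then show "z \<in> Oa \<union> Pa" using zt B_def by auto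
      qed
      have sep: "separatedin X Oa Pa" using OP by (simp add: separatedin_open_sets)
      have "proj_f X f y \<subseteq> Oa \<or> proj_f X f y \<subseteq> Pa"
        using connectedin_subset_separated_union[OF con sep sub] .
      moreover have "y \<in> proj_f X f y" using proj_self[OF yt] .
      moreover have "y \<in> Oa" using y(2) G_def by auto
      ultimately have "proj_f X f y \<subseteq> Oa" using OP(5) by (auto simp: disjnt_def)
      then have "a \<in> Oa" using pya proj_self[of a X f] a A closedin_subset by fast
      moreover have "a \<in> Pa" using a OP(4) by auto
      ultimately show False using OP(5) by (auto simp: disjnt_def)
    qed
  qed
  then show ?thesis using Ssub closure_of_subset_eq by blast
qed

lemma proj_closed:
  assumes cf: "continuous_map X T f" and HT: "Hausdorff_space T" and xt: "x \<in> topspace X"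
  shows "closedin X (proj_f X f x)"
proof -
  have fxT: "f x \<in> topspace T" using cf xt by (auto simp: continuous_map_def Pi_iff)
  have "closedin X {y \<in> topspace X. f y \<in> {f x}}"
    by (rule closedin_continuous_map_preimage[OF cf closedin_Hausdorff_singleton[OF HT fxT]])
  moreover have "{y \<in> topspace X. f y \<in> {f x}} = fiber X f x" unfolding fiber_def by auto
  ultimately have Fcl: "closedin X (fiber X f x)" by simp
  have "closedin (subtopology X (fiber X f x)) (proj_f X f x)" unfolding proj_eq
    by (rule closedin_connected_component_of)
  then show ?thesis using closedin_closed_subtopology[OF Fcl] by blast
qed

lemma proj_closed_map:
  assumes nX: "normal_space X" and cf: "continuous_map X T f" and clf: "closed_map X T f"
    and HT: "Hausdorff_space T" and lfc: "locally_fiber_connected X f"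
  shows "closed_map X (quot_f X f) (proj_f X f)"
  unfolding closed_map_def
proof (intro allI impI)
  fix A assume A: "closedin X A"
  have At: "A \<subseteq> topspace X" using A closedin_subset by blast
  have eq: "\<Union>(proj_f X f ` topspace X - proj_f X f ` A) = topspace X - \<Union>(proj_f X f ` A)"
  proof
    show "\<Union>(proj_f X f ` topspace X - proj_f X f ` A) \<subseteq> topspace X - \<Union>(proj_f X f ` A)"
    proof
      fix y assume "y \<in> \<Union>(proj_f X f ` topspace X - proj_f X f ` A)"
      then obtain z where z: "z \<in> topspace X" "proj_f X f z \<notin> proj_f X f ` A" "y \<in> proj_f X f z" by blast
      have "y \<in> topspace X" using z proj_topspace by fast
      moreover have "y \<notin> \<Union>(proj_f X f ` A)"
      proof
        assume "y \<in> \<Union>(proj_f X f ` A)"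
        then obtain a where a: "a \<in> A" "y \<in> proj_f X f a" by blast
        then have "proj_f X f z = proj_f X f a" using z(3) proj_overlap by fast
        then show False using z(2) a(1) by blast
      qed
      ultimately show "y \<in> topspace X - \<Union>(proj_f X f ` A)" by blast
    qed
  next
    show "topspace X - \<Union>(proj_f X f ` A) \<subseteq> \<Union>(proj_f X f ` topspace X - proj_f X f ` A)"
    proof
      fix y assume y: "y \<in> topspace X - \<Union>(proj_f X f ` A)"
      have yy: "y \<in> proj_f X f y" using y proj_self by (metis DiffD1)
      have "proj_f X f y \<notin> proj_f X f ` A"
      proof
        assume "proj_f X f y \<in> proj_f X f ` A"
        then obtain a where "a \<in> A" "proj_f X f y = proj_f X f a" by blast
        then show False using y yy by blast
      qed
      then show "y \<in> \<Union>(proj_f X f ` topspace X - proj_f X f ` A)" using y yy by blast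
    qed
  qed
  have "openin (quot_f X f) (topspace (quot_f X f) - proj_f X f ` A)"
    unfolding openin_quot topspace_quot eq
    using sat_closed[OF nX cf clf HT lfc A] by (simp add: closedin_def)
  moreover have "proj_f X f ` A \<subseteq> topspace (quot_f X f)" unfolding topspace_quot using At by blast
  ultimately show "closedin (quot_f X f) (proj_f X f ` A)" unfolding closedin_def by blast
qed

lemma quot_Hausdorff:
  assumes nX: "normal_space X" and cf: "continuous_map X T f" and clf: "closed_map X T f"
    and HT: "Hausdorff_space T" and lfc: "locally_fiber_connected X f"
  shows "Hausdorff_space (quot_f X f)"
  unfolding Hausdorff_space_def
proof (intro allI impI)
  fix c1 c2 assume c: "c1 \<in> topspace (quot_f X f) \<and> c2 \<in> topspace (quot_f X f) \<and> c1 \<noteq> c2"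
  then obtain x1 x2 where x: "x1 \<in> topspace X" "x2 \<in> topspace X" "c1 = proj_f X f x1" "c2 = proj_f X f x2"
    unfolding topspace_quot by blast
  have "disjnt c1 c2" using c x proj_overlap by (metis disjnt_iff)
  moreover have "closedin X c1" "closedin X c2" using x proj_closed[OF cf HT] by auto
  ultimately obtain U1 U2 where U: "openin X U1" "openin X U2" "c1 \<subseteq> U1" "c2 \<subseteq> U2" "disjnt U1 U2"
    using nX unfolding normal_space_def by metis
  have pc: "closed_map X (quot_f X f) (proj_f X f)" by (rule proj_closed_map[OF nX cf clf HT lfc])
  define G1 where "G1 = topspace (quot_f X f) - proj_f X f ` (topspace X - U1)"
  define G2 where "G2 = topspace (quot_f X f) - proj_f X f ` (topspace X - U2)"
  have "openin (quot_f X f) G1" unfolding G1_def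
    using pc U(1) unfolding closed_map_def by (meson closedin_def closedin_diff closedin_topspace)
  moreover have "openin (quot_f X f) G2" unfolding G2_def
    using pc U(2) unfolding closed_map_def by (meson closedin_def closedin_diff closedin_topspace)
  moreover have "c1 \<in> G1"
  proof -
    have "c1 \<notin> proj_f X f ` (topspace X - U1)"
    proof
      assume "c1 \<in> proj_f X f ` (topspace X - U1)"
      then obtain b where b: "b \<in> topspace X" "b \<notin> U1" "c1 = proj_f X f b" by blast
      then show False using proj_self[of b X f] U(3) by blast
    qed
    then show ?thesis using c G1_def by blast
  qed
  moreover have "c2 \<in> G2"
  proof -
    have "c2 \<notin> proj_f X f ` (topspace X - U2)"
    proof
      assume "c2 \<in> proj_f X f ` (topspace X - U2)"
      then obtain b where b: "b \<in> topspace X" "b \<notin> U2" "c2 = proj_f X f b" by blast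
      then show False using proj_self[of b X f] U(4) by blast
    qed
    then show ?thesis using c G2_def by blast
  qed
  moreover have "disjnt G1 G2"
    unfolding disjnt_def G1_def G2_def topspace_quot
    using U(5) by (auto simp: disjnt_def)
  ultimately show "\<exists>U V. openin (quot_f X f) U \<and> openin (quot_f X f) V \<and> c1 \<in> U \<and> c2 \<in> V \<and> disjnt U V"
    by blast
qed

theorem lemma2p20:
  fixes X :: "'a topology" and T :: "'v::real_vector topology" and f :: "'a \<Rightarrow> 'v"
  assumes "connected_space X" and "locally_connected_space X" and "Hausdorff_space X"
    and "normal_space X" and "first_countable X"
    and "locally_convex_tvs T"
    and "continuous_map X T f" and "closed_map X T f"
    and "local_convexity_data X T f" and "locally_fiber_connected X f"
  shows "closed_map X (quot_f X f) (proj_f X f) \<and> Hausdorff_space (quot_f X f)"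
proof -
  have HT: "Hausdorff_space T" using assms(6) unfolding locally_convex_tvs_def by blast
  show ?thesis
    using proj_closed_map[OF assms(4,7,8) HT assms(10)] quot_Hausdorff[OF assms(4,7,8) HT assms(10)]
    by blast
qed

end
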